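(* For each $k\in\mathbb{N}$ let $S_k$ be a nonempty set of setfunctions on $(\,[k],2^{[k]})$, and assume that $S=\bigcup_k S_k$ is quotient-closed and has the common lift property. Then there are setfunctions $\varphi_k\in S_k$ ($k\in\mathbb{N}$) such that $(\varphi_n\colon n\in\mathbb{N})$ is a tower and, for every $k$, $\bigcup_n Q_k(\varphi_n)$ is a dense subset of $S_k$.
   Context: A setfunction on a set-algebra $(J,\mathcal{B})$ is a map $\varphi\colon\mathcal{B}\to\mathbb{R}$ with $\varphi(\emptyset)=0$; $[k]=\{1,\dots,k\}$, $\mathbb{N}$ the positive integers. For a measurable map $F\colon J\to[k]$, the quotient $\varphi\circ F^{-1}$ is the setfunction $A\mapsto\varphi(F^{-1}(A))$ on $2^{[k]}$; $Q_k(\varphi)\subseteq\mathbb{R}^{2^k}$ is the set of all quotients of $\varphi$ on $[k]$. $\varphi$ is a lift of $\varphi'$ if $\varphi'$ is a quotient of $\varphi$. A family $A$ of finite setfunctions is quotient-closed if every quotient of a member of $A$ is in $A$, and has the common lift property if every finite subset of $A$ has a common lift in $A$. A tower is a sequence $(\varphi_n)$ of setfunctions on finite set-algebras $(J_n,2^{J_n})$ such that $\varphi_n$ is a quotient of $\varphi_{n+1}$ for every $n$. Density is with respect to the Euclidean topology of $\mathbb{R}^{2^k}$. *)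

theory Defs
  imports Complex_Main
begin

text \<open>A setfunction on ([k], 2^[k]) is represented as a function on nat sets that
vanishes on the empty set and on every set not contained in {1..k}
(so that only its values on subsets of [k] carry information).\<close>
definition setfun :: "nat \<Rightarrow> (nat set \<Rightarrow> real) \<Rightarrow> bool" where
  "setfun k \<phi> \<longleftrightarrow> \<phi> {} = 0 \<and> (\<forall>A. \<not> A \<subseteq> {1..k} \<longrightarrow> \<phi> A = 0)"

definition quot :: "nat \<Rightarrow> nat \<Rightarrow> (nat \<Rightarrow> nat) \<Rightarrow> (nat set \<Rightarrow> real) \<Rightarrow> (nat set \<Rightarrow> real)" where
  "quot n k F \<phi> = (\<lambda>A. if A \<subseteq> {1..k} then \<phi> {i \<in> {1..n}. F i \<in> A} else 0)"

definition is_quotient :: "nat \<Rightarrow> (nat set \<Rightarrow> real) \<Rightarrow> nat \<Rightarrow> (nat set \<Rightarrow> real) \<Rightarrow> bool" where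
  "is_quotient n \<phi> k \<psi> \<longleftrightarrow> (\<exists>F. (\<forall>i\<in>{1..n}. F i \<in> {1..k}) \<and> \<psi> = quot n k F \<phi>)"

definition Qk :: "nat \<Rightarrow> nat \<Rightarrow> (nat set \<Rightarrow> real) \<Rightarrow> (nat set \<Rightarrow> real) set" where
  "Qk k n \<phi> = {\<psi>. is_quotient n \<phi> k \<psi>}"

text \<open>The family S = union of the S_k (disjoint union, indexed by k) is quotient-closed.\<close>
definition quotient_closed :: "(nat \<Rightarrow> (nat set \<Rightarrow> real) set) \<Rightarrow> bool" where
  "quotient_closed S \<longleftrightarrow>
     (\<forall>n\<ge>1. \<forall>\<phi>\<in>S n. \<forall>k\<ge>1. \<forall>\<psi>. is_quotient n \<phi> k \<psi> \<longrightarrow> \<psi> \<in> S k)"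

definition common_lift_property :: "(nat \<Rightarrow> (nat set \<Rightarrow> real) set) \<Rightarrow> bool" where
  "common_lift_property S \<longleftrightarrow>
     (\<forall>I. finite I \<and> I \<subseteq> {(k, \<phi>). k \<ge> 1 \<and> \<phi> \<in> S k} \<longrightarrow>
        (\<exists>m\<ge>1. \<exists>\<psi>\<in>S m. \<forall>(k, \<phi>)\<in>I. is_quotient m \<psi> k \<phi>))"

definition tower :: "(nat \<Rightarrow> (nat set \<Rightarrow> real)) \<Rightarrow> bool" where
  "tower \<phi> \<longleftrightarrow> (\<forall>n\<ge>1. is_quotient (Suc n) (\<phi> (Suc n)) n (\<phi> n))"

text \<open>Density of D in S_k w.r.t. the Euclidean topology on R^(2^k) (sup-norm form).\<close>
definition dense_in_setfuns :: "nat \<Rightarrow> (nat set \<Rightarrow> real) set \<Rightarrow> (nat set \<Rightarrow> real) set \<Rightarrow> bool" where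
  "dense_in_setfuns k D T \<longleftrightarrow> D \<subseteq> T \<and>
     (\<forall>\<psi>\<in>T. \<forall>e>0. \<exists>\<chi>\<in>D. \<forall>A. A \<subseteq> {1..k} \<longrightarrow> \<bar>\<psi> A - \<chi> A\<bar> < e)"

end

theory Submission
  imports Defs "HOL-Library.Countable_Set" "HOL-Analysis.Finite_Cartesian_Product"
begin

lemma quot_comp:
  assumes "\<forall>i\<in>{1..n}. F i \<in> {1..k}"
  shows "quot k j G (quot n k F \<phi>) = quot n j (G \<circ> F) \<phi>"
proof (rule ext)
  fix A
  have "{i \<in> {1..n}. F i \<in> {v \<in> {1..k}. G v \<in> A}} = {i \<in> {1..n}. (G \<circ> F) i \<in> A}"
    using assms by auto
  then show "quot k j G (quot n k F \<phi>) A = quot n j (G \<circ> F) \<phi> A"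
    unfolding quot_def by auto
qed

lemma quot_cong:
  assumes "\<forall>i\<in>{1..n}. F i = F' i"
  shows "quot n k F \<phi> = quot n k F' \<phi>"
proof -
  have "\<And>A. {i \<in> {1..n}. F i \<in> A} = {i \<in> {1..n}. F' i \<in> A}" using assms by auto
  then show ?thesis unfolding quot_def by auto
qed

lemma quot_id:
  assumes "setfun n \<phi>" "\<forall>i\<in>{1..n}. F i = i"
  shows "quot n n F \<phi> = \<phi>"
proof (rule ext)
  fix A
  show "quot n n F \<phi> A = \<phi> A"
  proof (cases "A \<subseteq> {1..n}")
    case True
    then have "{i \<in> {1..n}. F i \<in> A} = A" using assms(2) by auto
    then show ?thesis using True unfolding quot_def by auto
  next
    case False
    then show ?thesis using assms(1) unfolding quot_def setfun_def by auto
  qed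
qed

lemma quot_trans:
  assumes "is_quotient n \<phi> k \<psi>" "is_quotient k \<psi> j \<gamma>"
  shows "is_quotient n \<phi> j \<gamma>"
proof -
  obtain F where F: "\<forall>i\<in>{1..n}. F i \<in> {1..k}" "\<psi> = quot n k F \<phi>"
    using assms(1) unfolding is_quotient_def by blast
  obtain G where G: "\<forall>i\<in>{1..k}. G i \<in> {1..j}" "\<gamma> = quot k j G \<psi>"
    using assms(2) unfolding is_quotient_def by blast
  have "\<gamma> = quot n j (G \<circ> F) \<phi>" using G(2) F quot_comp by metis
  moreover have "\<forall>i\<in>{1..n}. (G \<circ> F) i \<in> {1..j}" using F(1) G(1) by auto
  ultimately show ?thesis unfolding is_quotient_def by blast
qed

datatype st = St (s_n0: nat) (s_M: nat) (s_L: "nat set \<Rightarrow> real") (s_F: "nat \<Rightarrow> nat") (s_p: nat)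

definition EE :: "nat \<Rightarrow> (nat \<Rightarrow> nat) \<Rightarrow> nat \<Rightarrow> nat \<Rightarrow> nat" where
  "EE n0 F n i = (if i \<le> n - n0 then i + n0 else F i)"

definition phi_of :: "st \<Rightarrow> nat \<Rightarrow> nat set \<Rightarrow> real" where
  "phi_of s n = quot (s_M s) n (EE (s_n0 s) (s_F s) n) (s_L s)"

lemma EE_maps:
  assumes "\<forall>i\<in>{1..M}. F i \<in> {1..n0}" "n0 \<le> n" "n \<le> n0 + M"
  shows "\<forall>i\<in>{1..M}. EE n0 F n i \<in> {1..n}"
  using assms unfolding EE_def by fastforce

locale constr =
  fixes S :: "nat \<Rightarrow> (nat set \<Rightarrow> real) set"
  assumes ne: "\<And>k. k \<ge> 1 \<Longrightarrow> S k \<noteq> {}"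
    and sf: "\<And>k. k \<ge> 1 \<Longrightarrow> S k \<subseteq> {\<phi>. setfun k \<phi>}"
    and qc: "quotient_closed S"
    and cl: "common_lift_property S"
begin

definition Idx :: "(nat \<times> (nat set \<Rightarrow> rat) \<times> nat) set" where
  "Idx = (SIGMA k:{1..}. (Pi\<^sub>E (Pow {1..k}) (\<lambda>_. UNIV)) \<times> (UNIV :: nat set))"

lemma Idx_countable: "countable Idx"
  unfolding Idx_def
  by (intro countable_SIGMA countable_PiE) auto

lemma Idx_ne: "Idx \<noteq> {}"
proof -
  have "(1, (\<lambda>A\<in>Pow {1..1}. 0), 0) \<in> Idx" unfolding Idx_def by auto
  then show ?thesis by blast
qed

definition good where
  "good k q j \<psi> \<longleftrightarrow> \<psi> \<in> S k \<and> (\<forall>A. A \<subseteq> {1..k} \<longrightarrow> \<bar>\<psi> A - of_rat (q A)\<bar> < 1 / real (Suc j))"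

definition x1 where "x1 = (SOME x. x \<in> S 1)"

lemma x1: "x1 \<in> S 1"
  unfolding x1_def using ne[of 1] by (simp add: some_in_eq)

definition tgt :: "nat \<Rightarrow> nat \<times> (nat set \<Rightarrow> real)" where
  "tgt p = (case from_nat_into Idx p of (k, q, j) \<Rightarrow>
     if \<exists>\<psi>. good k q j \<psi> then (k, SOME \<psi>. good k q j \<psi>) else (1, x1))"

lemma tgt_ok: "fst (tgt p) \<ge> 1 \<and> snd (tgt p) \<in> S (fst (tgt p))"
proof -
  obtain k q j where e: "from_nat_into Idx p = (k, q, j)" by (metis prod_cases3)
  have "(k, q, j) \<in> Idx" using from_nat_into[OF Idx_ne, of p] e by simp
  then have k: "k \<ge> 1" unfolding Idx_def by auto
  show ?thesis
  proof (cases "\<exists>\<psi>. good k q j \<psi>")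
    case True
    then have "good k q j (SOME \<psi>. good k q j \<psi>)" by (rule someI_ex)
    then show ?thesis using True k e unfolding tgt_def good_def by simp
  next
    case False
    have "tgt p = (if \<exists>\<psi>. good k q j \<psi> then (k, SOME \<psi>. good k q j \<psi>) else (1, x1))"
      unfolding tgt_def e by simp
    then have "tgt p = (1, x1)" using False by (simp only: if_False)
    then show ?thesis using x1 by simp
  qed
qed

definition newphase :: "nat \<Rightarrow> nat \<Rightarrow> (nat set \<Rightarrow> real) \<Rightarrow> nat \<times> (nat set \<Rightarrow> real) \<times> (nat \<Rightarrow> nat)" where
  "newphase n p \<psi> = (SOME (M, L, F). M \<ge> 1 \<and> L \<in> S M \<and> (\<forall>i\<in>{1..M}. F i \<in> {1..n}) \<and>
      \<psi> = quot M n F L \<and> is_quotient M L (fst (tgt p)) (snd (tgt p)))"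

lemma newphase_ok:
  assumes "n \<ge> 1" "\<psi> \<in> S n"
  shows "case newphase n p \<psi> of (M, L, F) \<Rightarrow> M \<ge> 1 \<and> L \<in> S M \<and> (\<forall>i\<in>{1..M}. F i \<in> {1..n}) \<and>
      \<psi> = quot M n F L \<and> is_quotient M L (fst (tgt p)) (snd (tgt p))"
proof -
  obtain k0 c0 where t: "tgt p = (k0, c0)" by (cases "tgt p")
  have k0: "k0 \<ge> 1" "c0 \<in> S k0" using tgt_ok[of p] t by auto
  let ?I = "{(n, \<psi>), (k0, c0)}"
  have fin: "finite ?I" by simp
  have sub: "?I \<subseteq> {(k, \<phi>). k \<ge> 1 \<and> \<phi> \<in> S k}"
    using assms k0 by blast
  have "\<exists>m\<ge>1. \<exists>L\<in>S m. \<forall>(k, \<phi>)\<in>?I. is_quotient m L k \<phi>"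
    using cl fin sub unfolding common_lift_property_def by blast
  then obtain m L where m: "m \<ge> 1" "L \<in> S m" "\<forall>(k, \<phi>)\<in>?I. is_quotient m L k \<phi>"
    by blast
  have q1: "is_quotient m L n \<psi>" using m(3) by blast
  have q2: "is_quotient m L (fst (tgt p)) (snd (tgt p))" using m(3) t by simp
  obtain F where F: "\<forall>i\<in>{1..m}. F i \<in> {1..n}" "\<psi> = quot m n F L"
    using q1 unfolding is_quotient_def by blast
  have "\<exists>x. case x of (M, L, F) \<Rightarrow> M \<ge> 1 \<and> L \<in> S M \<and> (\<forall>i\<in>{1..M}. F i \<in> {1..n}) \<and>
      \<psi> = quot M n F L \<and> is_quotient M L (fst (tgt p)) (snd (tgt p))"
    using m F q2 by (intro exI[of _ "(m, L, F)"]) simp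
  then show ?thesis unfolding newphase_def by (rule someI_ex)
qed

definition mk where
  "mk n p \<psi> = (case newphase n p \<psi> of (M, L, F) \<Rightarrow> St n M L F p)"

definition invar0 where
  "invar0 s \<longleftrightarrow> s_n0 s \<ge> 1 \<and> s_M s \<ge> 1 \<and> s_L s \<in> S (s_M s) \<and> (\<forall>i\<in>{1..s_M s}. s_F s i \<in> {1..s_n0 s}) \<and>
     is_quotient (s_M s) (s_L s) (fst (tgt (s_p s))) (snd (tgt (s_p s)))"

lemma mk_ok:
  assumes "n \<ge> 1" "\<psi> \<in> S n"
  shows "invar0 (mk n p \<psi>) \<and> s_p (mk n p \<psi>) = p \<and> s_n0 (mk n p \<psi>) = n \<and> phi_of (mk n p \<psi>) n = \<psi>"
proof -
  obtain M L F where e: "newphase n p \<psi> = (M, L, F)" by (metis prod_cases3)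
  have P: "M \<ge> 1 \<and> L \<in> S M \<and> (\<forall>i\<in>{1..M}. F i \<in> {1..n}) \<and>
      \<psi> = quot M n F L \<and> is_quotient M L (fst (tgt p)) (snd (tgt p))"
    using newphase_ok[OF assms, of p] e by simp
  have m: "mk n p \<psi> = St n M L F p" unfolding mk_def e by simp
  have "quot M n (EE n F n) L = quot M n F L"
    by (rule quot_cong) (auto simp: EE_def)
  then have "phi_of (mk n p \<psi>) n = \<psi>" using P unfolding m phi_of_def by simp
  moreover have "invar0 (mk n p \<psi>)" unfolding m invar0_def st.sel using P assms by blast
  ultimately show ?thesis unfolding m by simp
qed

lemma phi_in:
  assumes "invar0 s" "s_n0 s \<le> n" "n \<le> s_n0 s + s_M s"
  shows "phi_of s n \<in> S n"
proof -
  have "\<forall>i\<in>{1..s_M s}. EE (s_n0 s) (s_F s) n i \<in> {1..n}"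
    using EE_maps assms unfolding invar0_def by blast
  then have "is_quotient (s_M s) (s_L s) n (phi_of s n)"
    unfolding is_quotient_def phi_of_def by blast
  moreover have "s_M s \<ge> 1" "s_L s \<in> S (s_M s)" "n \<ge> 1" using assms unfolding invar0_def by auto
  ultimately show ?thesis using qc unfolding quotient_closed_def by blast
qed

primrec stt :: "nat \<Rightarrow> st" where
  "stt 0 = mk 1 0 x1"
| "stt (Suc m) = (if Suc (Suc m) < s_n0 (stt m) + s_M (stt m) then stt m
     else mk (Suc (Suc m)) (Suc (s_p (stt m))) (phi_of (stt m) (Suc (Suc m))))"

lemma stt_inv: "invar0 (stt m) \<and> s_n0 (stt m) \<le> Suc m \<and> Suc m < s_n0 (stt m) + s_M (stt m)"
proof (induction m)
  case 0
  then show ?case using mk_ok[OF _ x1, of 0] unfolding invar0_def by auto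
next
  case (Suc m)
  show ?case
  proof (cases "Suc (Suc m) < s_n0 (stt m) + s_M (stt m)")
    case True
    then show ?thesis using Suc by simp
  next
    case False
    let ?s = "mk (Suc (Suc m)) (Suc (s_p (stt m))) (phi_of (stt m) (Suc (Suc m)))"
    have "phi_of (stt m) (Suc (Suc m)) \<in> S (Suc (Suc m))"
      using phi_in Suc False by simp
    then have "invar0 ?s \<and> s_n0 ?s = Suc (Suc m)"
      using mk_ok[of "Suc (Suc m)" "phi_of (stt m) (Suc (Suc m))" "Suc (s_p (stt m))"] by simp
    moreover have "s_M ?s \<ge> 1" using calculation unfolding invar0_def by simp
    ultimately show ?thesis using False by simp
  qed
qed

lemma stt_phi_step: "phi_of (stt (Suc m)) (Suc (Suc m)) = phi_of (stt m) (Suc (Suc m))"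
proof (cases "Suc (Suc m) < s_n0 (stt m) + s_M (stt m)")
  case True
  then show ?thesis by simp
next
  case False
  have "phi_of (stt m) (Suc (Suc m)) \<in> S (Suc (Suc m))"
    using phi_in stt_inv[of m] False by simp
  then show ?thesis using False mk_ok by simp
qed

lemma tower_step:
  assumes "invar0 s" "s_n0 s \<le> n" "n < s_n0 s + s_M s"
  shows "is_quotient (Suc n) (phi_of s (Suc n)) n (phi_of s n)"
proof -
  define n0 where "n0 = s_n0 s"
  define F where "F = s_F s"
  define M where "M = s_M s"
  have F: "\<forall>i\<in>{1..M}. F i \<in> {1..n0}" using assms(1) unfolding invar0_def F_def M_def n0_def by blast
  define G where "G v = (if v \<le> n then v else F (Suc n - n0))" for v
  have G: "\<forall>v\<in>{1..Suc n}. G v \<in> {1..n}"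
  proof
    fix v assume v: "v \<in> {1..Suc n}"
    show "G v \<in> {1..n}"
    proof (cases "v \<le> n")
      case True then show ?thesis using v G_def by simp
    next
      case False
      have "Suc n - n0 \<in> {1..M}" using assms unfolding n0_def M_def by auto
      then have "F (Suc n - n0) \<in> {1..n0}" using F by blast
      then show ?thesis using False assms(2) unfolding G_def n0_def by auto
    qed
  qed
  have E: "\<forall>i\<in>{1..M}. EE n0 F (Suc n) i \<in> {1..Suc n}"
    using EE_maps[OF F] assms unfolding n0_def M_def by simp
  have "quot (Suc n) n G (phi_of s (Suc n)) = quot M n (G \<circ> EE n0 F (Suc n)) (s_L s)"
    unfolding phi_of_def n0_def[symmetric] F_def[symmetric] M_def[symmetric]
    by (rule quot_comp[OF E])
  also have "\<dots> = quot M n (EE n0 F n) (s_L s)"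
  proof (rule quot_cong, rule ballI)
    fix i assume i: "i \<in> {1..M}"
    show "(G \<circ> EE n0 F (Suc n)) i = EE n0 F n i"
    proof -
      consider "i \<le> n - n0" | "i = Suc n - n0" | "i > Suc n - n0" using assms(2) unfolding n0_def by linarith
      then show ?thesis
      proof cases
        case 1 then show ?thesis using assms(2) unfolding EE_def G_def n0_def by auto
      next
        case 2 then show ?thesis using assms(2) unfolding EE_def G_def n0_def by auto
      next
        case 3
        have "F i \<in> {1..n0}" using F i by blast
        then show ?thesis using 3 assms(2) unfolding EE_def G_def n0_def by auto
      qed
    qed
  qed
  also have "\<dots> = phi_of s n" unfolding phi_of_def n0_def F_def M_def by simp
  finally show ?thesis using G unfolding is_quotient_def by metis
qed

definition phi :: "nat \<Rightarrow> nat set \<Rightarrow> real" where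
  "phi n = phi_of (stt (n - 1)) n"

lemma phi_S: "n \<ge> 1 \<Longrightarrow> phi n \<in> S n"
  using phi_in stt_inv[of "n - 1"] unfolding phi_def by simp

lemma phi_tower: "tower phi"
  unfolding tower_def
proof (intro allI impI)
  fix n :: nat assume "n \<ge> 1"
  then obtain m where n: "n = Suc m" by (cases n) auto
  have "phi (Suc n) = phi_of (stt m) (Suc n)"
    unfolding phi_def n using stt_phi_step by simp
  moreover have "phi n = phi_of (stt m) n" unfolding phi_def n by simp
  ultimately show "is_quotient (Suc n) (phi (Suc n)) n (phi n)"
    using tower_step stt_inv[of m] n by simp
qed

lemma stt_const:
  assumes "s_n0 (stt m) = Suc m"
  shows "d < s_M (stt m) \<Longrightarrow> stt (m + d) = stt m"
proof (induction d)
  case 0 then show ?case by simp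
next
  case (Suc d)
  then have "stt (m + d) = stt m" by simp
  then show ?case using Suc.prems assms by simp
qed

lemma phases: "\<exists>m. s_p (stt m) = p \<and> s_n0 (stt m) = Suc m"
proof (induction p)
  case 0
  then show ?case using mk_ok[OF _ x1, of 0] by (intro exI[of _ 0]) simp
next
  case (Suc p)
  then obtain m where m: "s_p (stt m) = p" "s_n0 (stt m) = Suc m" by blast
  define M where "M = s_M (stt m)"
  have M: "M \<ge> 1" using stt_inv[of m] unfolding invar0_def M_def by simp
  have "M - 1 < s_M (stt m)" using M unfolding M_def by simp
  from stt_const[OF m(2) this] have c: "stt (m + (M - 1)) = stt m" .
  define k where "k = m + (M - 1)"
  have ck: "stt k = stt m" using c k_def by simp
  have nl: "\<not> Suc (Suc k) < s_n0 (stt k) + s_M (stt k)"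
    using ck m M unfolding k_def M_def by simp
  have sk: "stt (Suc k) = mk (Suc (Suc k)) (Suc p) (phi_of (stt m) (Suc (Suc k)))"
    using nl ck m by simp
  have psin: "phi_of (stt m) (Suc (Suc k)) \<in> S (Suc (Suc k))"
    using phi_in stt_inv[of m] m(2) M unfolding k_def M_def by simp
  from mk_ok[OF _ psin, of "Suc p"] have "s_p (stt (Suc k)) = Suc p \<and> s_n0 (stt (Suc k)) = Suc (Suc k)"
    using sk by simp
  then show ?case by blast
qed

lemma cover: "\<exists>N\<ge>1. is_quotient N (phi N) (fst (tgt p)) (snd (tgt p))"
proof -
  obtain m where m: "s_p (stt m) = p" "s_n0 (stt m) = Suc m" using phases by blast
  define s where "s = stt m"
  define M where "M = s_M s"
  define L where "L = s_L s"
  define F where "F = s_F s"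
  have inv: "invar0 s" using stt_inv[of m] unfolding s_def by simp
  have M: "M \<ge> 1" using inv unfolding invar0_def M_def by simp
  define N where "N = Suc m + M"
  have "M - 1 < s_M (stt m)" using M unfolding M_def s_def by simp
  from stt_const[OF m(2) this] have c: "stt (m + (M - 1)) = stt m" .
  have "phi N = phi_of (stt (Suc (m + (M - 1)))) (Suc (Suc (m + (M - 1))))"
    unfolding phi_def N_def using M by (simp add: Suc_diff_le)
  also have "\<dots> = phi_of s N" unfolding stt_phi_step c s_def N_def using M by simp
  finally have pN: "phi N = quot M N (EE (Suc m) F N) L"
    unfolding phi_of_def s_def M_def L_def F_def using m by simp
  define G where "G v = (if Suc m < v then v - Suc m else 1)" for v
  have E: "\<forall>i\<in>{1..M}. EE (Suc m) F N i \<in> {1..N}" unfolding EE_def N_def by auto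
  have "quot N M G (phi N) = quot M M (G \<circ> EE (Suc m) F N) L"
    unfolding pN by (rule quot_comp[OF E])
  also have "\<dots> = L"
    by (rule quot_id) (use inv sf M in \<open>auto simp: L_def M_def invar0_def EE_def G_def N_def\<close>)
  finally have eq: "L = quot N M G (phi N)" by simp
  have Gm: "\<forall>v\<in>{1..N}. G v \<in> {1..M}" using M unfolding G_def N_def by auto
  have "is_quotient N (phi N) M L"
    unfolding is_quotient_def using Gm eq by blast
  moreover have "is_quotient M L (fst (tgt p)) (snd (tgt p))"
    using inv m unfolding invar0_def M_def L_def s_def by simp
  ultimately show ?thesis using quot_trans N_def by (intro exI[of _ N]) auto
qed

lemma dense_k:
  assumes k: "k \<ge> 1"
  shows "dense_in_setfuns k (\<Union>n\<in>{1..}. Qk k n (phi n)) (S k)"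
  unfolding dense_in_setfuns_def
proof (intro conjI ballI allI impI subsetI)
  fix x assume "x \<in> (\<Union>n\<in>{1..}. Qk k n (phi n))"
  then obtain n where n1: "n \<in> {1..}" and n2: "x \<in> Qk k n (phi n)" by blast
  have n: "n \<ge> 1" "is_quotient n (phi n) k x" using n1 n2 unfolding Qk_def by auto
  have Q: "\<forall>n\<ge>1. \<forall>\<phi>\<in>S n. \<forall>k\<ge>1. \<forall>\<psi>. is_quotient n \<phi> k \<psi> \<longrightarrow> \<psi> \<in> S k"
    using qc unfolding quotient_closed_def .
  show "x \<in> S k" using Q n phi_S[OF n(1)] k by blast
next
  fix \<psi> and e :: real assume psi: "\<psi> \<in> S k" and e: "e > 0"
  obtain n0 :: nat where n0: "n0 > 0" "inverse (real n0) < e / 2"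
    using ex_inverse_of_nat_less[of "e / 2"] e by auto
  define j where "j = n0 - 1"
  define d where "d = 1 / real (Suc j)"
  have sj: "Suc j = n0" unfolding j_def using n0(1) by simp
  have dj: "d = inverse (real n0)" unfolding d_def sj by (simp add: inverse_eq_divide)
  have d0: "d > 0" unfolding d_def by (simp only: divide_pos_pos zero_less_one of_nat_0_less_iff zero_less_Suc)
  have ex: "\<exists>r. \<bar>\<psi> A - of_rat r\<bar> < d" for A
  proof -
    obtain r where "\<psi> A - d < of_rat r" "of_rat r < \<psi> A + d"
      using of_rat_dense[of "\<psi> A - d" "\<psi> A + d"] d0 by auto
    then show ?thesis by (intro exI[of _ r]) auto
  qed
  define q where "q = (\<lambda>A\<in>Pow {1..k}. SOME r. \<bar>\<psi> A - of_rat r\<bar> < d)"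
  have qA: "\<bar>\<psi> A - of_rat (q A)\<bar> < d" if "A \<subseteq> {1..k}" for A
    using someI_ex[OF ex[of A]] that unfolding q_def by simp
  have inI: "(k, q, j) \<in> Idx" unfolding Idx_def q_def using k by auto
  have gd: "good k q j \<psi>" unfolding good_def using psi qA d_def by simp
  then have exg: "\<exists>\<psi>. good k q j \<psi>" by blast
  obtain p where p: "from_nat_into Idx p = (k, q, j)"
    using from_nat_into_surj[OF Idx_countable inI] by blast
  define c where "c = (SOME \<psi>. good k q j \<psi>)"
  have gc: "good k q j c" unfolding c_def using exg by (rule someI_ex)
  have tp: "tgt p = (k, c)" unfolding tgt_def p c_def using exg by simp
  obtain N where N: "N \<ge> 1" "is_quotient N (phi N) k c" using cover[of p] tp by auto
  have "c \<in> (\<Union>n\<in>{1..}. Qk k n (phi n))" using N unfolding Qk_def by auto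
  moreover have "\<forall>A. A \<subseteq> {1..k} \<longrightarrow> \<bar>\<psi> A - c A\<bar> < e"
  proof (intro allI impI)
    fix A assume A: "A \<subseteq> {1..k}"
    have "\<bar>c A - of_rat (q A)\<bar> < d" using gc A unfolding good_def d_def by simp
    moreover have "\<bar>\<psi> A - of_rat (q A)\<bar> < d" using qA A by simp
    moreover have "d < e / 2" using dj n0 by simp
    ultimately show "\<bar>\<psi> A - c A\<bar> < e" by linarith
  qed
  ultimately show "\<exists>\<gamma>\<in>(\<Union>n\<in>{1..}. Qk k n (phi n)). \<forall>A. A \<subseteq> {1..k} \<longrightarrow> \<bar>\<psi> A - \<gamma> A\<bar> < e"
    by blast
qed

end

theorem lemma2p6:
  fixes S :: "nat \<Rightarrow> (nat set \<Rightarrow> real) set"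
  assumes "\<And>k. k \<ge> 1 \<Longrightarrow> S k \<noteq> {}"
    and "\<And>k. k \<ge> 1 \<Longrightarrow> S k \<subseteq> {\<phi>. setfun k \<phi>}"
    and "quotient_closed S"
    and "common_lift_property S"
  shows "\<exists>\<phi>. (\<forall>k\<ge>1. \<phi> k \<in> S k) \<and> tower \<phi> \<and>
           (\<forall>k\<ge>1. dense_in_setfuns k (\<Union>n\<in>{1..}. Qk k n (\<phi> n)) (S k))"
proof -
  interpret constr S using assms by unfold_locales
  show ?thesis
  proof (intro exI[of _ phi] conjI allI impI)
    show "tower phi" by (rule phi_tower)
  next
    fix k :: nat assume "k \<ge> 1"
    then show "phi k \<in> S k" by (rule phi_S)
  next
    fix k :: nat assume k: "k \<ge> 1"
    then show "dense_in_setfuns k (\<Union>n\<in>{1..}. Qk k n (phi n)) (S k)" by (rule dense_k)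
  qed
qed

end
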